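(* Assume the setting below. Let $h=\max\{1,\lceil 8\kappa_Q^{1/2}C_A t_{\mathrm{mix}}/a\rceil\}$ and $\mathbf Y_1=(\mathrm I-\alpha\mathbf A(Z_h))(\mathrm I-\alpha\mathbf A(Z_{h-1}))\cdots(\mathrm I-\alpha\mathbf A(Z_1))$. Then for any $\alpha\in(0,\alpha^{(\mathrm M)}_\infty t_{\mathrm{mix}}^{-1}]$ and any initial probability measure $\xi$ on $(\mathsf Z,\mathcal Z)$, $\mathbb P_\xi$-almost surely, $$\|\mathbf Y_1-\mathbb E_\xi[\mathbf Y_1]\|_Q\le C_\sigma\,\alpha h,\qquad C_\sigma=2\bigl(\kappa_Q^{1/2}C_A+a/6\bigr).$$
   Context: Markov setting: $(\mathsf Z,\mathsf d_{\mathsf Z})$ is a Polish space with Borel $\sigma$-field $\mathcal Z$; $\mathrm P$ is a Markov kernel on $\mathsf Z\times\mathcal Z$ with invariant probability distribution $\pi$; for a probability measure $\xi$ on $\mathsf Z$, $(Z_k)_{k\ge0}$ denotes the Markov chain with kernel $\mathrm P$ and $Z_0\sim\xi$, with law $\mathbb P_\xi$ and expectation $\mathbb E_\xi$. For $k\ge1$, $\Delta(\mathrm P^k)=\sup_{z,z'\in\mathsf Z}\frac12\|\mathrm P^k(z,\cdot)-\mathrm P^k(z',\cdot)\|_{\mathrm{TV}}$ (total variation norm). Assume there is $t_{\mathrm{mix}}\in\mathbb N^*$ with $\Delta(\mathrm P^k)\le(1/4)^{\lfloor k/t_{\mathrm{mix}}\rfloor}$ for all $k\in\mathbb N^*$.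 LSA data: $d\ge1$; $\mathbf A:\mathsf Z\to\mathbb R^{d\times d}$ measurable with $\bar{\mathbf A}=\int\mathbf A\,d\pi$; $\|\cdot\|$ is the Euclidean/spectral norm; $-\bar{\mathbf A}$ is Hurwitz (all eigenvalues of $\bar{\mathbf A}$ have positive real part); $C_A:=\sup_z\|\mathbf A(z)\|\vee\sup_z\|\mathbf A(z)-\bar{\mathbf A}\|<\infty$. $Q$ is the unique symmetric positive definite solution of $\bar{\mathbf A}^\top Q+Q\bar{\mathbf A}=\mathrm I$; $\|x\|_Q=(x^\top Qx)^{1/2}$, $\|B\|_Q=\max_{\|x\|_Q=1}\|Bx\|_Q$; $\kappa_Q=\lambda_{\max}(Q)/\lambda_{\min}(Q)$; $a=1/(2\|Q\|)$; $\alpha_\infty=\min\{1/(2\|\bar{\mathbf A}\|_Q^2\|Q\|),\|Q\|\}$; and $$\alpha^{(\mathrm M)}_\infty=\min\Bigl\{\alpha_\infty,\ \kappa_Q^{-1/2}C_A^{-1},\ \frac{a}{6e\kappa_QC_A^2}\Bigr\}\Big/\bigl\lceil 8\kappa_Q^{1/2}C_A/a\bigr\rceil .$$ *)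

theory Defs
  imports "HOL-Probability.Probability"
begin

fun kpow :: "('z::topological_space \<Rightarrow> 'z measure) \<Rightarrow> nat \<Rightarrow> 'z \<Rightarrow> 'z measure" where
  "kpow P 0 z = return borel z"
| "kpow P (Suc k) z = bind (kpow P k z) P"

definition tv_norm_diff :: "'z::topological_space measure \<Rightarrow> 'z measure \<Rightarrow> real" where
  "tv_norm_diff \<mu> \<nu> = Sup {(\<Sum>B\<in>F. \<bar>measure \<mu> B - measure \<nu> B\<bar>) | F.
       finite F \<and> F \<subseteq> sets borel \<and> disjoint F}"

definition dobrushin :: "('z::topological_space \<Rightarrow> 'z measure) \<Rightarrow> real" where
  "dobrushin K = Sup {tv_norm_diff (K z) (K z') / 2 | z z'. True}"

text \<open>(Z_k) is a Markov chain with kernel P and initial law xi, realised on the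
  probability space M: Z_0 ~ xi and for every n the conditional law of Z_{n+1} given
  (Z_0,...,Z_n) is P(Z_n, .).\<close>
definition markov_chain ::
  "'w measure \<Rightarrow> (nat \<Rightarrow> 'w \<Rightarrow> 'z::topological_space) \<Rightarrow> ('z \<Rightarrow> 'z measure) \<Rightarrow> 'z measure \<Rightarrow> bool" where
  "markov_chain M Z P \<xi> \<longleftrightarrow>
     prob_space M \<and> (\<forall>i. Z i \<in> borel_measurable M) \<and> distr M borel (Z 0) = \<xi> \<and>
     (\<forall>n B A. B \<in> sets (PiM {0..n} (\<lambda>_. borel)) \<longrightarrow> A \<in> sets borel \<longrightarrow>
        measure M {\<omega> \<in> space M. (\<lambda>i\<in>{0..n}. Z i \<omega>) \<in> B \<and> Z (Suc n) \<omega> \<in> A}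
        = (\<integral>\<omega>. indicator B (\<lambda>i\<in>{0..n}. Z i \<omega>) * measure (P (Z n \<omega>)) A \<partial>M))"

definition invariant :: "('z::topological_space \<Rightarrow> 'z measure) \<Rightarrow> 'z measure \<Rightarrow> bool" where
  "invariant P \<pi> \<longleftrightarrow> prob_space \<pi> \<and> sets \<pi> = sets borel \<and>
     (\<forall>A \<in> sets borel. measure \<pi> A = (\<integral>z. measure (P z) A \<partial>\<pi>))"

definition opnorm :: "real^'d^'d \<Rightarrow> real" where
  "opnorm B = onorm (\<lambda>x. B *v x)"

definition neg_hurwitz :: "real^'d^'d \<Rightarrow> bool" where
  "neg_hurwitz B \<longleftrightarrow> (\<forall>(\<mu>::complex) (v::complex^'d). v \<noteq> 0 \<and>
      (\<chi> i j. complex_of_real (B $ i $ j)) *v v = \<mu> *s v \<longrightarrow> Re \<mu> > 0)"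

definition pos_def :: "real^'d^'d \<Rightarrow> bool" where
  "pos_def Q \<longleftrightarrow> transpose Q = Q \<and> (\<forall>x. x \<noteq> 0 \<longrightarrow> x \<bullet> (Q *v x) > 0)"

definition real_eigenvalues :: "real^'d^'d \<Rightarrow> real set" where
  "real_eigenvalues Q = {\<mu>. \<exists>v. v \<noteq> 0 \<and> Q *v v = \<mu> *\<^sub>R v}"

definition lam_max :: "real^'d^'d \<Rightarrow> real" where
  "lam_max Q = Max (real_eigenvalues Q)"

definition lam_min :: "real^'d^'d \<Rightarrow> real" where
  "lam_min Q = Min (real_eigenvalues Q)"

definition kappa :: "real^'d^'d \<Rightarrow> real" where
  "kappa Q = lam_max Q / lam_min Q"

definition vnormQ :: "real^'d^'d \<Rightarrow> real^'d \<Rightarrow> real" where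
  "vnormQ Q x = sqrt (x \<bullet> (Q *v x))"

definition mnormQ :: "real^'d^'d \<Rightarrow> real^'d^'d \<Rightarrow> real" where
  "mnormQ Q B = Sup {vnormQ Q (B *v x) | x. vnormQ Q x = 1}"

definition C_A :: "('z \<Rightarrow> real^'d^'d) \<Rightarrow> real^'d^'d \<Rightarrow> real" where
  "C_A A Abar = max (SUP z. opnorm (A z)) (SUP z. opnorm (A z - Abar))"

definition a_const :: "real^'d^'d \<Rightarrow> real" where
  "a_const Q = 1 / (2 * opnorm Q)"

definition alpha_inf :: "real^'d^'d \<Rightarrow> real^'d^'d \<Rightarrow> real" where
  "alpha_inf Q Abar = min (1 / (2 * (mnormQ Q Abar)\<^sup>2 * opnorm Q)) (opnorm Q)"

definition alpha_inf_M :: "real^'d^'d \<Rightarrow> real^'d^'d \<Rightarrow> real \<Rightarrow> real" where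
  "alpha_inf_M Q Abar CA =
     Min {alpha_inf Q Abar, 1 / (sqrt (kappa Q) * CA),
          a_const Q / (6 * exp 1 * kappa Q * CA\<^sup>2)}
     / real_of_int \<lceil>8 * sqrt (kappa Q) * CA / a_const Q\<rceil>"

fun prodY :: "('z \<Rightarrow> real^'d^'d) \<Rightarrow> real \<Rightarrow> (nat \<Rightarrow> 'w \<Rightarrow> 'z) \<Rightarrow> nat \<Rightarrow> 'w \<Rightarrow> real^'d^'d" where
  "prodY A \<alpha> Z 0 \<omega> = mat 1"
| "prodY A \<alpha> Z (Suc k) \<omega> = (mat 1 - \<alpha> *\<^sub>R A (Z (Suc k) \<omega>)) ** prodY A \<alpha> Z k \<omega>"

end

theory Submission
  imports Defs
begin


lemma sym_inner:
  fixes Q :: "real^'d^'d"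
  assumes "transpose Q = Q"
  shows "(Q *v x) \<bullet> y = x \<bullet> (Q *v y)"
proof -
  have "Q *v x = x v* Q" using vector_transpose_matrix[of x Q] assms by simp
  thus ?thesis by (simp add: dot_lmul_matrix)
qed

lemma quad_scale: "(c *\<^sub>R x) \<bullet> (Q *v (c *\<^sub>R x)) = c^2 * (x \<bullet> (Q *v x))"
  for Q :: "real^'d^'d"
  by (simp add: matrix_vector_mult_scaleR power2_eq_square)

lemma rayleigh_max:
  fixes Q :: "real^'d^'d"
  assumes sym: "transpose Q = Q"
  shows "\<exists>u \<mu>. u \<noteq> 0 \<and> Q *v u = \<mu> *\<^sub>R u \<and> (\<forall>x. x \<bullet> (Q *v x) \<le> \<mu> * (norm x)\<^sup>2)"
proof -
  let ?f = "\<lambda>x::real^'d. x \<bullet> (Q *v x)"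
  have cont: "continuous_on (sphere 0 1) ?f"
    by (intro continuous_intros linear_continuous_on matrix_vector_mul_linear bounded_linear_inner_left
        linear_linear[THEN iffD1] ) 
  obtain i :: 'd where True by simp
  have ne: "sphere (0::real^'d) 1 \<noteq> {}"
    using norm_axis_1[of i] by (metis mem_sphere_0 empty_iff)
  obtain u where u: "u \<in> sphere 0 1" and umax: "\<And>y. y \<in> sphere 0 1 \<Longrightarrow> ?f y \<le> ?f u"
    using continuous_attains_sup[OF compact_sphere ne cont] by blast
  define \<mu> where "\<mu> = ?f u"
  have nu: "norm u = 1" using u by simp
  have bound: "?f x \<le> \<mu> * (norm x)\<^sup>2" for x
  proof (cases "x = 0")
    case True thus ?thesis by simp
  next
    case False
    have "?f ((1/norm x) *\<^sub>R x) \<le> \<mu>" using umax[of "(1/norm x) *\<^sub>R x"] False by (simp add: \<mu>_def)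
    hence "(1/norm x)^2 * ?f x \<le> \<mu>" by (simp only: quad_scale)
    hence "?f x \<le> \<mu> * (norm x)^2" using False by (simp add: field_simps)
    thus ?thesis .
  qed
  define w where "w = Q *v u - \<mu> *\<^sub>R u"
  have wu: "w \<bullet> u = 0"
  proof -
    have uu: "u \<bullet> u = 1" using nu by (simp add: norm_eq_1)
    have "u \<bullet> w = 0" unfolding w_def \<mu>_def by (simp add: inner_diff_right uu)
    thus ?thesis by (simp add: inner_commute)
  qed
  have wQu: "w \<bullet> (Q *v u) = (norm w)^2"
  proof -
    have "Q *v u = w + \<mu> *\<^sub>R u" by (simp add: w_def)
    thus ?thesis using wu by (simp add: inner_add_right power2_norm_eq_inner)
  qed
  define K where "K = \<mu> * (norm w)^2 - w \<bullet> (Q *v w)"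
  have key: "2 * t * (norm w)^2 \<le> t^2 * K" for t :: real
  proof -
    have "?f (u + t *\<^sub>R w) \<le> \<mu> * (norm (u + t *\<^sub>R w))^2" by (rule bound)
    moreover have "?f (u + t *\<^sub>R w) = \<mu> + 2 * t * (norm w)^2 + t^2 * (w \<bullet> (Q *v w))"
    proof -
      have "?f (u + t *\<^sub>R w) = ?f u + t * (u \<bullet> (Q *v w)) + t * (w \<bullet> (Q *v u)) + t^2 * (w \<bullet> (Q *v w))"
        by (simp add: matrix_vector_right_distrib matrix_vector_mult_scaleR inner_add_left inner_add_right power2_eq_square algebra_simps)
      also have "u \<bullet> (Q *v w) = w \<bullet> (Q *v u)" using sym_inner[OF sym, of u w] by (simp add: inner_commute)
      finally show ?thesis using wQu by (simp add: \<mu>_def)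
    qed
    moreover have "(norm (u + t *\<^sub>R w))^2 = 1 + t^2 * (norm w)^2"
    proof -
      have uu: "u \<bullet> u = 1" using nu by (simp add: norm_eq_1)
      have uw: "u \<bullet> w = 0" using wu by (simp add: inner_commute)
      show ?thesis unfolding power2_norm_eq_inner using uu uw wu by (simp add: inner_add_left inner_add_right power2_eq_square algebra_simps)
    qed
    ultimately show ?thesis by (simp add: K_def algebra_simps)
  qed
  have "w = 0"
  proof (rule ccontr)
    assume "w \<noteq> 0"
    hence p: "(norm w)^2 > 0" by simp
    define t where "t = (norm w)^2 / (\<bar>K\<bar> + 1)"
    have tp: "t > 0" using p by (simp add: t_def)
    have "2 * t * (norm w)^2 \<le> t * (t * K)" using key[of t] by (simp add: power2_eq_square algebra_simps)
    hence "2 * (norm w)^2 \<le> t * K" using tp by simp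
    also have "t * K \<le> t * \<bar>K\<bar>" using tp by (simp add: mult_left_mono)
    also have "t * \<bar>K\<bar> < (norm w)^2" using p by (simp add: t_def field_simps)
    finally show False using p by simp
  qed
  hence "Q *v u = \<mu> *\<^sub>R u" by (simp add: w_def)
  moreover have "u \<noteq> 0" using nu by auto
  ultimately show ?thesis using bound by blast
qed

lemma eig_finite:
  fixes Q :: "real^'d^'d"
  assumes sym: "transpose Q = Q"
  shows "finite (real_eigenvalues Q)"
proof -
  let ?S = "real_eigenvalues Q"
  define g where "g \<mu> = (SOME v. v \<noteq> 0 \<and> Q *v v = \<mu> *\<^sub>R v)" for \<mu>
  have g: "g \<mu> \<noteq> 0 \<and> Q *v g \<mu> = \<mu> *\<^sub>R g \<mu>" if "\<mu> \<in> ?S" for \<mu>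
    using that unfolding real_eigenvalues_def g_def by (metis (mono_tags, lifting) mem_Collect_eq someI_ex)
  have inj: "inj_on g ?S"
  proof (rule inj_onI)
    fix x y assume x: "x \<in> ?S" and y: "y \<in> ?S" and e: "g x = g y"
    have "x *\<^sub>R g x = y *\<^sub>R g x" using g[OF x] g[OF y] e by metis
    thus "x = y" using g[OF x] by (simp add: scaleR_cancel_right)
  qed
  have orth: "pairwise orthogonal (g ` ?S)"
  proof (clarsimp simp: pairwise_def)
    fix x y assume x: "x \<in> ?S" and y: "y \<in> ?S" and ne: "g x \<noteq> g y"
    hence xy: "x \<noteq> y" by auto
    have "x * (g x \<bullet> g y) = (Q *v g x) \<bullet> g y" using g[OF x] by simp
    also have "\<dots> = g x \<bullet> (Q *v g y)" by (rule sym_inner[OF sym])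
    also have "\<dots> = y * (g x \<bullet> g y)" using g[OF y] by simp
    finally show "orthogonal (g x) (g y)" using xy by (simp add: orthogonal_def)
  qed
  have "0 \<notin> g ` ?S" using g by auto
  hence "independent (g ` ?S)" using orth pairwise_orthogonal_independent by blast
  hence "finite (g ` ?S)" using independent_bound by blast
  thus ?thesis using finite_imageD inj by blast
qed

lemma eig_pos:
  fixes Q :: "real^'d^'d"
  assumes "pos_def Q" "\<mu> \<in> real_eigenvalues Q"
  shows "\<mu> > 0"
proof -
  obtain v where v: "v \<noteq> 0" "Q *v v = \<mu> *\<^sub>R v" using assms(2) unfolding real_eigenvalues_def by auto
  have "v \<bullet> (Q *v v) > 0" using assms(1) v unfolding pos_def_def by auto
  hence "\<mu> * (v \<bullet> v) > 0" using v by simp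
  moreover have "v \<bullet> v > 0" using v by simp
  ultimately show ?thesis by (simp add: zero_less_mult_iff)
qed

lemma lam_bounds:
  fixes Q :: "real^'d^'d"
  assumes pd: "pos_def Q"
  shows "0 < lam_min Q" "lam_min Q \<le> lam_max Q"
    "\<And>x. x \<bullet> (Q *v x) \<le> lam_max Q * (norm x)\<^sup>2"
    "\<And>x. lam_min Q * (norm x)\<^sup>2 \<le> x \<bullet> (Q *v x)"
proof -
  have sym: "transpose Q = Q" using pd by (simp add: pos_def_def)
  have fin: "finite (real_eigenvalues Q)" by (rule eig_finite[OF sym])
  obtain u \<mu> where u: "u \<noteq> 0" "Q *v u = \<mu> *\<^sub>R u" and ub: "\<And>x. x \<bullet> (Q *v x) \<le> \<mu> * (norm x)\<^sup>2"
    using rayleigh_max[OF sym] by blast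
  have symn: "transpose (-Q) = -Q" proof -
    have "transpose (-Q) = - transpose Q" by (simp add: transpose_def vec_eq_iff)
    thus ?thesis using sym by simp
  qed
  have negmv: "(-Q) *v x = - (Q *v x)" for x :: "real^'d"
    by (simp add: matrix_vector_mult_def vec_eq_iff sum_negf)
  obtain v \<nu> where v: "v \<noteq> 0" "(-Q) *v v = \<nu> *\<^sub>R v" and vb: "\<And>x. x \<bullet> ((-Q) *v x) \<le> \<nu> * (norm x)\<^sup>2"
    using rayleigh_max[OF symn] by blast
  have muS: "\<mu> \<in> real_eigenvalues Q" using u unfolding real_eigenvalues_def by auto
  have "Q *v v = (-\<nu>) *\<^sub>R v" using v(2) negmv[of v] by (metis minus_equation_iff scaleR_minus_left)
  hence nuS: "-\<nu> \<in> real_eigenvalues Q" using v(1) unfolding real_eigenvalues_def by auto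
  have lmax: "\<mu> \<le> lam_max Q" unfolding lam_max_def using fin muS by simp
  have lmin: "lam_min Q \<le> -\<nu>" unfolding lam_min_def using fin nuS by simp
  have lminS: "lam_min Q \<in> real_eigenvalues Q" unfolding lam_min_def using fin nuS by (intro Min_in) auto
  show "0 < lam_min Q" using eig_pos[OF pd lminS] .
  show "lam_min Q \<le> lam_max Q" unfolding lam_min_def lam_max_def using fin muS by (meson Min_le Max_ge order.trans)
  show "x \<bullet> (Q *v x) \<le> lam_max Q * (norm x)\<^sup>2" for x
    using ub[of x] lmax by (meson mult_right_mono zero_le_power2 order.trans)
  show "lam_min Q * (norm x)\<^sup>2 \<le> x \<bullet> (Q *v x)" for x
  proof -
    have "- (x \<bullet> (Q *v x)) \<le> \<nu> * (norm x)\<^sup>2" using vb[of x] by (simp add: negmv)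
    hence "-\<nu> * (norm x)\<^sup>2 \<le> x \<bullet> (Q *v x)" by simp
    thus ?thesis using lmin by (meson mult_right_mono zero_le_power2 order.trans)
  qed
qed

lemma opnorm_bound: "norm (B *v x) \<le> opnorm B * norm x"
  unfolding opnorm_def by (rule onorm) simp

lemma opnorm_le: "(\<And>x. norm (B *v x) \<le> c * norm x) \<Longrightarrow> opnorm B \<le> c"
  unfolding opnorm_def by (rule onorm_le)

lemma opnorm_nonneg: "0 \<le> opnorm B"
  unfolding opnorm_def by (rule onorm_pos_le) simp

lemma kappa_ge1: "pos_def Q \<Longrightarrow> 1 \<le> kappa Q"
  using lam_bounds(1,2)[of Q] unfolding kappa_def by simp

lemma mnormQ_le:
  fixes Q B :: "real^'d^'d"
  assumes pd: "pos_def Q"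
  shows "mnormQ Q B \<le> sqrt (kappa Q) * opnorm B"
proof -
  let ?l = "lam_min Q" and ?L = "lam_max Q"
  have lp: "0 < ?l" and lL: "?l \<le> ?L" using lam_bounds[OF pd] by auto
  have Lp: "0 < ?L" using lp lL by simp
  have ne: "{vnormQ Q (B *v x) | x. vnormQ Q x = 1} \<noteq> {}"
  proof -
    obtain i :: 'd where True by simp
    define e :: "real^'d" where "e = axis i 1"
    have e0: "e \<noteq> 0" by (simp add: e_def axis_eq_0_iff)
    have qp: "e \<bullet> (Q *v e) > 0" using pd e0 unfolding pos_def_def by auto
    define c where "c = 1 / sqrt (e \<bullet> (Q *v e))"
    have "vnormQ Q (c *\<^sub>R e) = 1"
      unfolding vnormQ_def quad_scale c_def using qp by (simp add: power_divide)
    thus ?thesis by blast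
  qed
  show ?thesis unfolding mnormQ_def
  proof (rule cSup_least[OF ne], clarsimp)
    fix x :: "real^'d" assume x1: "vnormQ Q x = 1"
    have q1: "x \<bullet> (Q *v x) = 1" using x1 unfolding vnormQ_def by simp
    have "?l * (norm x)^2 \<le> 1" using lam_bounds(4)[OF pd, of x] q1 by simp
    hence "(norm x)^2 \<le> 1 / ?l" using lp by (simp add: field_simps)
    hence nx: "norm x \<le> sqrt (1 / ?l)" by (simp add: real_le_rsqrt)
    have "vnormQ Q (B *v x) \<le> sqrt (?L * (norm (B *v x))^2)"
      unfolding vnormQ_def using lam_bounds(3)[OF pd] by simp
    also have "\<dots> = sqrt ?L * norm (B *v x)" using Lp by (simp add: real_sqrt_mult)
    also have "\<dots> \<le> sqrt ?L * (opnorm B * norm x)"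
      by (intro mult_left_mono opnorm_bound) (use Lp in simp)
    also have "\<dots> \<le> sqrt ?L * (opnorm B * sqrt (1 / ?l))"
      by (intro mult_left_mono nx opnorm_nonneg) (use Lp in simp_all)
    also have "\<dots> = sqrt (kappa Q) * opnorm B"
      unfolding kappa_def by (simp add: real_sqrt_divide)
    finally show "vnormQ Q (B *v x) \<le> sqrt (kappa Q) * opnorm B" .
  qed
qed

lemma cont_mmult: "continuous_on UNIV (\<lambda>x::(real^'d^'d) \<times> (real^'d^'d). fst x ** snd x)"
  unfolding matrix_matrix_mult_def
  by (intro continuous_on_vec_lambda continuous_intros)

lemma meas_mmult:
  fixes f g :: "'w \<Rightarrow> real^'d^'d"
  assumes "f \<in> borel_measurable M" "g \<in> borel_measurable M"
  shows "(\<lambda>x. f x ** g x) \<in> borel_measurable M"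
  using borel_measurable_continuous_Pair[OF assms cont_mmult] by simp

lemma meas_prodY:
  fixes A :: "'z::topological_space \<Rightarrow> real^'d^'d"
  assumes A: "A \<in> borel_measurable borel" and Z: "\<And>i. Z i \<in> borel_measurable M"
  shows "prodY A \<alpha> Z k \<in> borel_measurable M"
proof (induction k)
  case 0 show ?case by simp
next
  case (Suc k)
  have "(\<lambda>\<omega>. A (Z (Suc k) \<omega>)) \<in> borel_measurable M"
    using measurable_compose[OF Z A] by simp
  hence "(\<lambda>\<omega>. mat 1 - \<alpha> *\<^sub>R A (Z (Suc k) \<omega>)) \<in> borel_measurable M" by measurable
  hence "(\<lambda>\<omega>. (mat 1 - \<alpha> *\<^sub>R A (Z (Suc k) \<omega>)) ** prodY A \<alpha> Z k \<omega>) \<in> borel_measurable M"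
    using Suc meas_mmult by blast
  thus ?case by (simp add: fun_eq_iff)
qed

lemma opnorm_mult: "opnorm (B ** C) \<le> opnorm B * opnorm C"
  for B C :: "real^'d^'d"
proof (rule opnorm_le)
  fix x
  have "norm ((B ** C) *v x) = norm (B *v (C *v x))" by (simp add: matrix_vector_mul_assoc)
  also have "\<dots> \<le> opnorm B * norm (C *v x)" by (rule opnorm_bound)
  also have "\<dots> \<le> opnorm B * (opnorm C * norm x)" by (intro mult_left_mono opnorm_bound opnorm_nonneg)
  finally show "norm ((B ** C) *v x) \<le> opnorm B * opnorm C * norm x" by (simp add: mult.assoc)
qed

lemma opnorm_diff: "opnorm (B - C) \<le> opnorm B + opnorm C"
  for B C :: "real^'d^'d"
proof (rule opnorm_le)
  fix x
  have "norm ((B - C) *v x) = norm (B *v x - C *v x)" by (simp add: matrix_vector_mult_diff_rdistrib)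
  also have "\<dots> \<le> norm (B *v x) + norm (C *v x)" by (rule norm_triangle_ineq4)
  also have "\<dots> \<le> opnorm B * norm x + opnorm C * norm x" by (intro add_mono opnorm_bound)
  finally show "norm ((B - C) *v x) \<le> (opnorm B + opnorm C) * norm x" by (simp add: algebra_simps)
qed

lemma opnorm_add: "opnorm (B + C) \<le> opnorm B + opnorm C"
  for B C :: "real^'d^'d"
proof (rule opnorm_le)
  fix x
  have "norm ((B + C) *v x) = norm (B *v x + C *v x)" by (simp add: matrix_vector_mult_add_rdistrib)
  also have "\<dots> \<le> norm (B *v x) + norm (C *v x)" by (rule norm_triangle_ineq)
  also have "\<dots> \<le> opnorm B * norm x + opnorm C * norm x" by (intro add_mono opnorm_bound)
  finally show "norm ((B + C) *v x) \<le> (opnorm B + opnorm C) * norm x" by (simp add: algebra_simps)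
qed

lemma opnorm_scale: "opnorm (c *\<^sub>R B) \<le> \<bar>c\<bar> * opnorm B"
  for B :: "real^'d^'d"
proof (rule opnorm_le)
  fix x
  have "norm ((c *\<^sub>R B) *v x) = \<bar>c\<bar> * norm (B *v x)" by (simp add: scaleR_matrix_vector_assoc[symmetric])
  also have "\<dots> \<le> \<bar>c\<bar> * (opnorm B * norm x)" by (intro mult_left_mono opnorm_bound) simp
  finally show "norm ((c *\<^sub>R B) *v x) \<le> \<bar>c\<bar> * opnorm B * norm x" by (simp add: mult.assoc)
qed

lemma opnorm_one: "opnorm (mat 1 :: real^'d^'d) \<le> 1"
  by (rule opnorm_le) simp

lemma step_eq: "(mat 1 - c *\<^sub>R B) ** Y = Y - c *\<^sub>R (B ** (Y::real^'d^'d)) - mat 1 + mat 1"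
proof -
  have "(mat 1 - c *\<^sub>R B) ** Y = mat 1 ** Y - (c *\<^sub>R B) ** Y"
    by (simp add: matrix_matrix_mult_def vec_eq_iff sum_subtractf left_diff_distrib)
  thus ?thesis by (simp add: scalar_matrix_assoc)
qed

lemma prodY_bound:
  fixes A :: "'z \<Rightarrow> real^'d^'d"
  assumes AC: "\<And>z. opnorm (A z) \<le> C" and ap: "0 \<le> \<alpha>"
  shows "opnorm (prodY A \<alpha> Z k \<omega> - mat 1) \<le> (1 + \<alpha> * C)^k - 1"
proof (induction k)
  case 0 show ?case by (simp add: opnorm_le)
next
  case (Suc k)
  let ?Y = "prodY A \<alpha> Z k \<omega>" and ?B = "A (Z (Suc k) \<omega>)"
  have C0: "0 \<le> C" using AC[of undefined] opnorm_nonneg order.trans by blast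
  have Yb: "opnorm ?Y \<le> (1 + \<alpha> * C)^k"
  proof -
    have "opnorm ?Y = opnorm ((?Y - mat 1) + mat 1)" by simp
    also have "\<dots> \<le> opnorm (?Y - mat 1) + opnorm (mat 1 :: real^'d^'d)" by (rule opnorm_add)
    also have "\<dots> \<le> ((1 + \<alpha> * C)^k - 1) + 1" by (intro add_mono Suc opnorm_one)
    finally show ?thesis by simp
  qed
  have eq: "prodY A \<alpha> Z (Suc k) \<omega> - mat 1 = (?Y - mat 1) - \<alpha> *\<^sub>R (?B ** ?Y)"
    by (simp add: step_eq)
  have "opnorm (prodY A \<alpha> Z (Suc k) \<omega> - mat 1) \<le> opnorm (?Y - mat 1) + opnorm (\<alpha> *\<^sub>R (?B ** ?Y))"
    unfolding eq by (rule opnorm_diff)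
  also have "opnorm (\<alpha> *\<^sub>R (?B ** ?Y)) \<le> \<alpha> * (C * (1 + \<alpha> * C)^k)"
  proof -
    have "opnorm (\<alpha> *\<^sub>R (?B ** ?Y)) \<le> \<bar>\<alpha>\<bar> * opnorm (?B ** ?Y)" by (rule opnorm_scale)
    also have "\<dots> \<le> \<alpha> * (opnorm ?B * opnorm ?Y)" using ap by (simp add: mult_left_mono opnorm_mult)
    also have "\<dots> \<le> \<alpha> * (C * (1 + \<alpha> * C)^k)"
      using ap by (intro mult_left_mono mult_mono AC Yb opnorm_nonneg C0) auto
    finally show ?thesis .
  qed
  finally show ?case using Suc by (simp add: algebra_simps)
qed

lemma entry_le_opnorm: "\<bar>B $ i $ j\<bar> \<le> opnorm (B :: real^'d^'d)"
proof -
  have "(B *v axis j 1) $ i = B $ i $ j"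
    by (simp add: matrix_vector_mult_def axis_def if_distrib if_distribR cong: if_cong)
  hence "\<bar>B $ i $ j\<bar> \<le> norm (B *v axis j 1)" by (metis component_le_norm_cart)
  also have "\<dots> \<le> opnorm B * norm (axis j (1::real))" by (rule opnorm_bound)
  finally show ?thesis by (simp add: norm_axis_1)
qed

lemma norm_le_opnorm: "norm (B :: real^'d^'d) \<le> real (CARD('d))^2 * opnorm B"
proof -
  have "norm B \<le> (\<Sum>i\<in>UNIV. norm (B $ i))" unfolding norm_vec_def by (rule L2_set_le_sum) simp
  also have "\<dots> \<le> (\<Sum>i\<in>(UNIV::'d set). (\<Sum>j\<in>(UNIV::'d set). opnorm B))"
  proof (rule sum_mono)
    fix i
    have "norm (B $ i) \<le> (\<Sum>j\<in>UNIV. \<bar>B $ i $ j\<bar>)" by (rule norm_le_l1_cart)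
    also have "\<dots> \<le> (\<Sum>j\<in>(UNIV::'d set). opnorm B)" by (intro sum_mono entry_le_opnorm)
    finally show "norm (B $ i) \<le> (\<Sum>j\<in>(UNIV::'d set). opnorm B)" .
  qed
  also have "\<dots> = real (CARD('d))^2 * opnorm B" by (simp add: power2_eq_square)
  finally show ?thesis .
qed

lemma bl_mv: "bounded_linear (\<lambda>B::real^'d^'d. B *v v)"
proof -
  have "linear (\<lambda>B::real^'d^'d. B *v v)"
    by (rule linearI) (simp_all add: matrix_vector_mult_add_rdistrib scaleR_matrix_vector_assoc[symmetric])
  thus ?thesis by (simp add: linear_conv_bounded_linear)
qed

lemma expect_bound:
  fixes X :: "'w \<Rightarrow> real^'d^'d"
  assumes ps: "prob_space M" and meas: "X \<in> borel_measurable M" and b: "\<And>\<omega>. opnorm (X \<omega>) \<le> K"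
  shows "integrable M X" "opnorm (\<integral>\<omega>. X \<omega> \<partial>M) \<le> K"
proof -
  interpret prob_space M by (rule ps)
  have ae: "AE x in M. norm (X x) \<le> (real CARD('d))\<^sup>2 * K"
    by (intro AE_I2 order.trans[OF norm_le_opnorm] mult_left_mono b) simp
  show int: "integrable M X"
    using integrable_const_bound[OF ae meas] .
  show "opnorm (\<integral>\<omega>. X \<omega> \<partial>M) \<le> K"
  proof (rule opnorm_le)
    fix v :: "real^'d"
    have "(\<integral>\<omega>. X \<omega> \<partial>M) *v v = (\<integral>\<omega>. X \<omega> *v v \<partial>M)"
      using integral_bounded_linear[OF bl_mv int, of v] by simp
    hence "norm ((\<integral>\<omega>. X \<omega> \<partial>M) *v v) \<le> (\<integral>\<omega>. norm (X \<omega> *v v) \<partial>M)"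
      by (simp only: integral_norm_bound)
    also have "\<dots> \<le> (\<integral>\<omega>. K * norm v \<partial>M)"
    proof (rule integral_mono)
      show "integrable M (\<lambda>\<omega>. norm (X \<omega> *v v))"
        by (intro integrable_norm integrable_bounded_linear[OF bl_mv int])
      show "integrable M (\<lambda>\<omega>. K * norm v)" by simp
      show "norm (X \<omega> *v v) \<le> K * norm v" for \<omega>
        using opnorm_bound[of "X \<omega>" v] b[of \<omega>] by (meson mult_right_mono norm_ge_zero order.trans)
    qed
    also have "\<dots> = K * norm v" by (simp add: prob_space)
    finally show "norm ((\<integral>\<omega>. X \<omega> \<partial>M) *v v) \<le> K * norm v" .
  qed
qed

lemma numeric:
  fixes s c a \<alpha> m0 :: real and t :: nat
  assumes s1: "1 \<le> s" and c0: "0 \<le> c" and a0: "0 < a" and t1: "1 \<le> t" and ap: "0 < \<alpha>"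
    and al: "\<alpha> \<le> Min {m0, 1/(s*c), a/(6*exp 1*(s^2)*c^2)} / real_of_int \<lceil>8 * s * c/a\<rceil> / real t"
  shows "s * (2*((1+\<alpha>*c)^(nat (max 1 \<lceil>8 * s * c*real t/a\<rceil>)) - 1))
         \<le> 2*(s*c + a/6)*\<alpha>*real (nat (max 1 \<lceil>8 * s * c*real t/a\<rceil>))"
proof (cases "c = 0")
  case True thus ?thesis using ap a0 by simp
next
  case False
  hence cp: "0 < c" using c0 by simp
  define h where "h = nat (max 1 \<lceil>8 * s * c*real t/a\<rceil>)"
  define N where "N = \<lceil>8 * s * c/a\<rceil>"
  have Np: "1 \<le> N" unfolding N_def using cp s1 a0 by (simp add: zero_less_mult_iff)
  have tp: "0 < real t" using t1 by simp
  have hN: "real h \<le> real_of_int N * real t"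
  proof -
    have "of_int \<lceil>8 * s * c*real t/a\<rceil> \<le> real_of_int N * real t"
    proof -
      have "8 * s * c*real t/a = (8 * s * c/a) * real t" by simp
      also have "\<dots> \<le> real_of_int N * real t" unfolding N_def
        by (intro mult_right_mono) (simp_all)
      finally have "\<lceil>8 * s * c*real t/a\<rceil> \<le> N * int t"
        by (metis ceiling_le of_int_of_nat_eq of_int_mult)
      thus ?thesis by (metis of_int_le_iff of_int_mult of_int_of_nat_eq)
    qed
    moreover have "1 \<le> real_of_int N * real t" using Np t1
      by (metis mult_mono' of_int_1_le_iff of_nat_1 of_nat_le_iff mult_1 zero_le_one)
    ultimately show ?thesis unfolding h_def by (simp add: max_def)
  qed
  let ?m = "Min {m0, 1/(s*c), a/(6*exp 1*(s^2)*c^2)}"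
  have m1: "?m \<le> 1/(s*c)" and m2: "?m \<le> a/(6*exp 1*(s^2)*c^2)" by auto
  have "\<alpha> * (real_of_int N * real t) \<le> ?m"
    using al Np tp by (simp add: N_def field_simps)
  hence ah: "\<alpha> * real h \<le> ?m"
    using hN ap by (meson mult_left_mono order.trans less_imp_le)
  have ah1: "\<alpha> * real h \<le> 1/(s*c)" using ah m1 by simp
  have ah2: "\<alpha> * real h \<le> a/(6*exp 1*(s^2)*c^2)" using ah m2 by simp
  define y where "y = \<alpha> * real h * c"
  have y0: "0 \<le> y" using ap cp by (simp add: y_def)
  have ys: "y \<le> 1 / s" using ah1 cp s1 unfolding y_def by (simp add: field_simps)
  hence y1: "y \<le> 1" using s1 by (smt (verit) divide_le_eq_1)
  have "(1+\<alpha>*c)^h \<le> exp (\<alpha>*c)^h"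
    using ap cp by (intro power_mono) (simp_all add: exp_ge_add_one_self)
  also have "\<dots> = exp y" unfolding y_def by (simp add: exp_of_nat_mult[symmetric] mult_ac)
  also have "\<dots> \<le> 1 + y + y^2" by (rule exp_bound[OF y0 y1])
  finally have pb: "(1+\<alpha>*c)^h - 1 \<le> y + y^2" by simp
  have "s * y^2 \<le> \<alpha> * real h * (a/6)"
  proof -
    have "s * y^2 = (\<alpha> * real h) * (s * c^2 * (\<alpha> * real h))" unfolding y_def by (simp add: power2_eq_square)
    also have "s * c^2 * (\<alpha> * real h) \<le> s * c^2 * (a/(6*exp 1*(s^2)*c^2))"
      using s1 by (intro mult_left_mono ah2) simp
    also have "\<dots> = a / (6 * exp 1 * s)" using cp s1 by (simp add: field_simps power2_eq_square)
    also have "\<dots> \<le> a / 6"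
    proof -
      have "6 \<le> 6 * exp 1 * s" using s1 by (smt (verit) exp_ge_add_one_self mult_left_mono mult_le_cancel_left1)
      thus ?thesis using a0 by (intro divide_left_mono) auto
    qed
    finally show ?thesis using ap by (simp add: mult_left_mono)
  qed
  hence "s * ((1+\<alpha>*c)^h - 1) \<le> s * y + \<alpha> * real h * (a/6)"
    using pb s1 by (smt (verit) mult_left_mono distrib_left)
  hence "s * (2*((1+\<alpha>*c)^h - 1)) \<le> 2*(s*c + a/6)*\<alpha>*real h"
    unfolding y_def by (simp add: algebra_simps)
  thus ?thesis unfolding h_def .
qed

theorem lemma8:
  fixes P :: "'z::polish_space \<Rightarrow> 'z measure"
    and \<pi> \<xi> :: "'z measure"
    and t_mix :: nat
    and A :: "'z \<Rightarrow> real^'d^'d"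
    and Abar Q :: "real^'d^'d"
    and M :: "'w measure"
    and Z :: "nat \<Rightarrow> 'w \<Rightarrow> 'z"
    and \<alpha> :: real
  assumes kernel: "P \<in> borel \<rightarrow>\<^sub>M prob_algebra borel"
    and inv: "invariant P \<pi>"
    and tmix_pos: "t_mix \<ge> 1"
    and mixing: "\<And>k. k \<ge> 1 \<Longrightarrow> dobrushin (kpow P k) \<le> (1/4) ^ (k div t_mix)"
    and A_meas: "A \<in> borel_measurable borel"
    and Abar_def: "Abar = (\<integral>z. A z \<partial>\<pi>)"
    and hurwitz: "neg_hurwitz Abar"
    and A_bdd: "bdd_above (range (\<lambda>z. opnorm (A z)))"
    and A_bdd': "bdd_above (range (\<lambda>z. opnorm (A z - Abar)))"
    and Q_pd: "pos_def Q"
    and Q_lyap: "transpose Abar ** Q + Q ** Abar = mat 1"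
    and xi: "prob_space \<xi>" "sets \<xi> = sets borel"
    and chain: "markov_chain M Z P \<xi>"
    and alpha_pos: "0 < \<alpha>"
    and alpha_le: "\<alpha> \<le> alpha_inf_M Q Abar (C_A A Abar) / real t_mix"
  shows "AE \<omega> in M.
     mnormQ Q (prodY A \<alpha> Z
                 (nat (max 1 \<lceil>8 * sqrt (kappa Q) * C_A A Abar * real t_mix / a_const Q\<rceil>)) \<omega>
               - (\<integral>\<omega>'. prodY A \<alpha> Z
                 (nat (max 1 \<lceil>8 * sqrt (kappa Q) * C_A A Abar * real t_mix / a_const Q\<rceil>)) \<omega>' \<partial>M))
     \<le> 2 * (sqrt (kappa Q) * C_A A Abar + a_const Q / 6) * \<alpha>
        * real (nat (max 1 \<lceil>8 * sqrt (kappa Q) * C_A A Abar * real t_mix / a_const Q\<rceil>))"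
proof -
  define C where "C = C_A A Abar"
  define s where "s = sqrt (kappa Q)"
  define a where "a = a_const Q"
  define h where "h = nat (max 1 \<lceil>8 * s * C * real t_mix / a\<rceil>)"
  define Y where "Y = prodY A \<alpha> Z h"
  define X where "X = (\<lambda>\<omega>. Y \<omega> - mat 1)"
  define K where "K = (1 + \<alpha> * C)^h - 1"
  have AC: "opnorm (A z) \<le> C" for z
  proof -
    have "opnorm (A z) \<le> (SUP z. opnorm (A z))" by (rule cSUP_upper[OF _ A_bdd]) simp
    thus ?thesis unfolding C_def C_A_def by simp
  qed
  have C0: "0 \<le> C" using AC[of undefined] opnorm_nonneg order.trans by blast
  have ps: "prob_space M" and Zm: "\<And>i. Z i \<in> borel_measurable M"
    using chain unfolding markov_chain_def by auto
  interpret prob_space M by (rule ps)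
  have Ym: "Y \<in> borel_measurable M" unfolding Y_def by (rule meas_prodY[OF A_meas Zm])
  have Xm: "X \<in> borel_measurable M" unfolding X_def using Ym by measurable
  have XK: "opnorm (X \<omega>) \<le> K" for \<omega>
    unfolding X_def Y_def K_def by (rule prodY_bound[where A=A and C=C]) (use AC alpha_pos in auto)
  have Xint: "integrable M X" and EX: "opnorm (\<integral>\<omega>. X \<omega> \<partial>M) \<le> K"
    using expect_bound[OF ps Xm XK] by auto
  have EY: "(\<integral>\<omega>. Y \<omega> \<partial>M) = (\<integral>\<omega>. X \<omega> \<partial>M) + mat 1"
  proof -
    have "(\<integral>\<omega>. Y \<omega> \<partial>M) = (\<integral>\<omega>. X \<omega> + mat 1 \<partial>M)" unfolding X_def by simp
    also have "\<dots> = (\<integral>\<omega>. X \<omega> \<partial>M) + (\<integral>\<omega>. mat 1 \<partial>M)" by (rule Bochner_Integration.integral_add[OF Xint integrable_const])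
    finally show ?thesis by (simp add: prob_space)
  qed
  have pdQ: "0 < opnorm Q"
  proof (rule ccontr)
    assume "\<not> 0 < opnorm Q"
    hence z: "opnorm Q = 0" using opnorm_nonneg[of Q] by simp
    obtain i :: 'd where True by simp
    have "norm (Q *v axis i 1) \<le> 0" using opnorm_bound[of Q "axis i 1"] z by simp
    hence "Q *v axis i 1 = 0" by simp
    moreover have "axis i (1::real) \<noteq> 0" by (simp add: axis_eq_0_iff)
    ultimately show False using Q_pd unfolding pos_def_def by fastforce
  qed
  have a0: "0 < a" unfolding a_def a_const_def using pdQ by simp
  have s1: "1 \<le> s" unfolding s_def using kappa_ge1[OF Q_pd] by simp
  have ks: "kappa Q = s^2" unfolding s_def using kappa_ge1[OF Q_pd] by simp
  have al: "\<alpha> \<le> Min {alpha_inf Q Abar, 1/(s*C), a/(6*exp 1*(s^2)*C^2)} / real_of_int \<lceil>8 * s * C/a\<rceil> / real t_mix"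
  proof -
    have kq: "(sqrt (kappa Q))^2 = kappa Q" using kappa_ge1[OF Q_pd] by simp
    show ?thesis using alpha_le unfolding alpha_inf_M_def s_def a_def C_def kq by simp
  qed
  have num: "s * (2*((1+\<alpha>*C)^h - 1)) \<le> 2*(s*C + a/6)*\<alpha>*real h"
    unfolding h_def by (rule numeric[OF s1 C0 a0 tmix_pos alpha_pos al])
  have bound: "mnormQ Q (Y \<omega> - (\<integral>\<omega>'. Y \<omega>' \<partial>M)) \<le> 2*(s*C + a/6)*\<alpha>*real h" for \<omega>
  proof -
    have eq: "Y \<omega> - (\<integral>\<omega>'. Y \<omega>' \<partial>M) = X \<omega> - (\<integral>\<omega>'. X \<omega>' \<partial>M)" unfolding EY X_def by simp
    have "mnormQ Q (Y \<omega> - (\<integral>\<omega>'. Y \<omega>' \<partial>M)) \<le> s * opnorm (X \<omega> - (\<integral>\<omega>'. X \<omega>' \<partial>M))"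
      unfolding eq s_def by (rule mnormQ_le[OF Q_pd])
    also have "\<dots> \<le> s * (2 * K)"
      using s1 by (intro mult_left_mono order.trans[OF opnorm_diff]) (use XK[of \<omega>] EX in auto)
    also have "\<dots> \<le> 2*(s*C + a/6)*\<alpha>*real h" using num unfolding K_def .
    finally show ?thesis .
  qed
  show ?thesis
    using bound unfolding Y_def h_def s_def a_def C_def by (intro AE_I2) simp
qed
end
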